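(* Let $R$ be a finite chain ring, let $A\subseteq R$ be a well-conditioned set of size $n$, partitioned as $A=\bigcup_{i=1}^lA_i$ into nonempty blocks, and let $h_A(x)=\prod_{a\in A}(x-a)$. Let $$\mathcal F_A=\{f\in R[x]:\ \deg f<|A|,\ f \text{ is constant on } A_i \text{ for every } i\},$$ an $R$-algebra with the usual addition and multiplication modulo $h_A$. Then: (1) If $f\in\mathcal F_A$ is not a constant polynomial, then $\max_i|A_i|\le\deg f<|A|$. (2) $\mathcal F_A$ is a free $R$-module of rank $l$, with basis $f_1,\dots,f_l$ where $$f_i(x)=\sum_{a\in A_i}\prod_{b\in A\setminus\{a\}}\frac{x-b}{a-b},$$ which satisfy $f_i(A_j)=\delta_{i,j}$. (3) If $\{c_1,\dots,c_l\}\subseteq R$ is a well-conditioned set of $l$ distinct elements and $g$ is the unique polynomial of degree $<|A|$ with $g(A_i)=c_i$ for all $i$, then $1,g,g^2,\dots,g^{l-1}$ (powers computed in $\mathcal F_A$, i.e. modulo $h_A$) form a basis of $\mathcal F_A$ as an $R$-module.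
   Context: A finite chain ring is a finite commutative local ring whose ideals are totally ordered by inclusion; $N(R)$ is its unit group. A subset $T\subseteq N(R)$ is subtractive if $a-b\in N(R)$ for all distinct $a,b\in T$. A set $\{a_1,\dots,a_n\}\subseteq R$ is well-conditioned if either it is a subtractive subset of $N(R)$, or for some $i$ the set without $a_i$ is a subtractive subset of $N(R)$ and $a_i$ is a zero divisor (or $0$). For a block $A_i$ and $f$ constant on it, $f(A_i)$ denotes that constant value. *)

theory Defs
  imports "HOL-Computational_Algebra.Polynomial"
begin

definition ring_ideal :: "'a::comm_ring_1 set \<Rightarrow> bool" where
  "ring_ideal I \<longleftrightarrow> 0 \<in> I \<and> (\<forall>x\<in>I. \<forall>y\<in>I. x + y \<in> I) \<and> (\<forall>r. \<forall>x\<in>I. r * x \<in> I)"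

definition local_ring :: "'a::comm_ring_1 itself \<Rightarrow> bool" where
  "local_ring _ \<longleftrightarrow> (0::'a) \<noteq> 1 \<and> ring_ideal {x::'a. \<not> x dvd 1}"

definition finite_chain_ring :: "'a::comm_ring_1 itself \<Rightarrow> bool" where
  "finite_chain_ring T \<longleftrightarrow> finite (UNIV :: 'a set) \<and> local_ring T \<and>
     (\<forall>I J :: 'a set. ring_ideal I \<longrightarrow> ring_ideal J \<longrightarrow> I \<subseteq> J \<or> J \<subseteq> I)"

definition subtractive :: "'a::comm_ring_1 set \<Rightarrow> bool" where
  "subtractive T \<longleftrightarrow> (\<forall>a\<in>T. a dvd 1) \<and> (\<forall>a\<in>T. \<forall>b\<in>T. a \<noteq> b \<longrightarrow> (a - b) dvd 1)"

definition zero_divisor :: "'a::comm_ring_1 \<Rightarrow> bool" where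
  "zero_divisor a \<longleftrightarrow> (\<exists>b. b \<noteq> 0 \<and> a * b = 0)"

definition well_conditioned :: "'a::comm_ring_1 set \<Rightarrow> bool" where
  "well_conditioned A \<longleftrightarrow> subtractive A \<or>
     (\<exists>a\<in>A. subtractive (A - {a}) \<and> (zero_divisor a \<or> a = 0))"

definition unit_inv :: "'a::comm_ring_1 \<Rightarrow> 'a" where
  "unit_inv x = (SOME y. x * y = 1)"

text \<open>The paper's convention deg 0 = -infinity: "deg f < n" is rendered as f = 0 or degree f < n.\<close>
definition deg_less :: "'a::zero poly \<Rightarrow> nat \<Rightarrow> bool" where
  "deg_less f n \<longleftrightarrow> f = 0 \<or> degree f < n"

definition h_poly :: "'a::comm_ring_1 set \<Rightarrow> 'a poly" where
  "h_poly A = (\<Prod>a\<in>A. [:-a, 1:])"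

definition mod_monic :: "'a::comm_ring_1 poly \<Rightarrow> 'a poly \<Rightarrow> 'a poly" where
  "mod_monic p h = (THE r. deg_less r (degree h) \<and> (\<exists>q. p = q * h + r))"

definition F_alg :: "'a::comm_ring_1 set \<Rightarrow> (nat \<Rightarrow> 'a set) \<Rightarrow> nat \<Rightarrow> 'a poly set" where
  "F_alg A B l = {f. deg_less f (card A) \<and>
      (\<forall>i<l. \<forall>a\<in>B i. \<forall>b\<in>B i. poly f a = poly f b)}"

definition is_partition :: "'a set \<Rightarrow> (nat \<Rightarrow> 'a set) \<Rightarrow> nat \<Rightarrow> bool" where
  "is_partition A B l \<longleftrightarrow> (\<forall>i<l. B i \<noteq> {}) \<and>
     (\<forall>i<l. \<forall>j<l. i \<noteq> j \<longrightarrow> B i \<inter> B j = {}) \<and> (\<Union>i<l. B i) = A"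

definition is_basis :: "'a::comm_ring_1 poly set \<Rightarrow> (nat \<Rightarrow> 'a poly) \<Rightarrow> nat \<Rightarrow> bool" where
  "is_basis F fs l \<longleftrightarrow>
     F = {(\<Sum>i<l. smult (c i) (fs i)) | c. True} \<and>
     (\<forall>c. (\<Sum>i<l. smult (c i) (fs i)) = 0 \<longrightarrow> (\<forall>i<l. c i = 0))"

definition lagrange_block :: "'a::comm_ring_1 set \<Rightarrow> 'a set \<Rightarrow> 'a poly" where
  "lagrange_block A Ai = (\<Sum>a\<in>Ai. \<Prod>b\<in>A - {a}. smult (unit_inv (a - b)) [:-b, 1:])"

end

theory Submission
  imports Defs
begin

definition udiff :: "'a::comm_ring_1 set \<Rightarrow> bool" where
  "udiff S \<longleftrightarrow> (\<forall>a\<in>S. \<forall>b\<in>S. a \<noteq> b \<longrightarrow> (a - b) dvd 1)"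

lemma lin_mult:
  fixes q :: "'a::comm_ring_1 poly"
  assumes "q \<noteq> 0"
  shows "[:-a,1:] * q \<noteq> 0 \<and> degree ([:-a,1:] * q) = Suc (degree q)"
proof -
  have c: "coeff ([:-a,1:] * q) (degree [:-a,1:] + degree q) = lead_coeff q"
    by (subst coeff_mult_degree_sum) simp
  have ne: "lead_coeff q \<noteq> 0" using assms by simp
  have d1: "degree [:-a,1:] = 1" by simp
  have "degree [:-a,1:] + degree q \<le> degree ([:-a,1:] * q)"
    using c ne by (intro le_degree) simp
  then have "Suc (degree q) \<le> degree ([:-a,1:] * q)" using d1 by simp
  moreover have "degree ([:-a,1:] * q) \<le> Suc (degree q)"
    using degree_mult_le[of "[:-a,1:]" q] by simp
  ultimately show ?thesis using c ne by force
qed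

lemma h_mult:
  fixes q :: "'a::comm_ring_1 poly"
  assumes "finite S" "q \<noteq> 0"
  shows "h_poly S * q \<noteq> 0 \<and> degree (h_poly S * q) = card S + degree q"
  using assms(1)
proof (induction S rule: finite_induct)
  case empty
  then show ?case using assms by (simp add: h_poly_def)
next
  case (insert x F)
  have "h_poly (insert x F) * q = [:-x,1:] * (h_poly F * q)"
    by (simp only: h_poly_def prod.insert[OF insert(1,2)] mult.assoc)
  then show ?case using insert lin_mult[of "h_poly F * q" x] by simp
qed

lemma root_dvd:
  fixes p :: "'a::comm_ring_1 poly"
  assumes "finite S" "udiff S" "\<forall>s\<in>S. poly p s = 0"
  shows "h_poly S dvd p"
  using assms
proof (induction S arbitrary: p rule: finite_induct)
  case empty
  then show ?case by (simp add: h_poly_def)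
next
  case (insert x F)
  from insert.prems have "[:-x,1:] dvd p" by (simp add: poly_eq_0_iff_dvd)
  then obtain q where q: "p = [:-x,1:] * q" by (auto elim: dvdE)
  have "\<forall>s\<in>F. poly q s = 0"
  proof
    fix s assume s: "s \<in> F"
    then have "s \<noteq> x" using insert by auto
    then have u: "(s - x) dvd 1" using insert.prems s unfolding udiff_def by auto
    have e: "poly ([:-x,1:] * q) s = (s - x) * poly q s" by (simp add: algebra_simps)
    have "poly p s = (s - x) * poly q s" by (subst q) (rule e)
    then have z: "(s - x) * poly q s = 0" using insert.prems s by auto
    obtain k where k: "1 = (s - x) * k" using u by (auto elim: dvdE)
    have "poly q s = ((s - x) * k) * poly q s" by (simp add: k[symmetric])
    also have "\<dots> = k * ((s - x) * poly q s)" by (simp add: algebra_simps)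
    also have "\<dots> = 0" using z by simp
    finally show "poly q s = 0" .
  qed
  moreover have "udiff F" using insert.prems unfolding udiff_def by auto
  ultimately have "h_poly F dvd q" using insert.IH by blast
  then have "[:-x,1:] * h_poly F dvd [:-x,1:] * q" by (rule mult_dvd_mono[OF dvd_refl])
  moreover have "h_poly (insert x F) = [:-x,1:] * h_poly F"
    by (simp only: h_poly_def prod.insert[OF insert(1,2)])
  ultimately show ?case using q by simp
qed

lemma zero_unique:
  fixes p :: "'a::comm_ring_1 poly"
  assumes "finite S" "udiff S" "\<forall>s\<in>S. poly p s = 0" "deg_less p n" "n \<le> card S"
  shows "p = 0"
proof (rule ccontr)
  assume ne: "p \<noteq> 0"
  obtain q where q: "p = h_poly S * q" using root_dvd[OF assms(1-3)] by (auto elim: dvdE)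
  then have "q \<noteq> 0" using ne by auto
  then have "degree p = card S + degree q" using h_mult[OF assms(1)] q by auto
  then show False using assms(4,5) ne unfolding deg_less_def by auto
qed

lemma deg_less_coeff: "deg_less p n \<longleftrightarrow> (\<forall>k\<ge>n. coeff p k = 0)"
proof
  assume "deg_less p n"
  then show "\<forall>k\<ge>n. coeff p k = 0"
    unfolding deg_less_def by (auto intro: coeff_eq_0)
next
  assume h: "\<forall>k\<ge>n. coeff p k = 0"
  show "deg_less p n"
  proof (cases "p = 0")
    case False
    have "\<not> n \<le> degree p"
    proof
      assume "n \<le> degree p"
      then have "lead_coeff p = 0" using h by auto
      then show False using False by simp
    qed
    then show ?thesis unfolding deg_less_def by simp
  qed (simp add: deg_less_def)
qed

lemma local_units:
  fixes u v :: "'a::comm_ring_1"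
  assumes L: "local_ring TYPE('a)" and v: "\<not> v dvd 1" and u: "u dvd 1"
  shows "(u - v) dvd 1 \<and> (v - u) dvd 1"
proof -
  have I: "ring_ideal {x::'a. \<not> x dvd 1}" using L unfolding local_ring_def by blast
  have add: "\<And>x y::'a. \<not> x dvd 1 \<Longrightarrow> \<not> y dvd 1 \<Longrightarrow> \<not> (x + y) dvd 1"
    using I unfolding ring_ideal_def by blast
  have mul: "\<And>r x::'a. \<not> x dvd 1 \<Longrightarrow> \<not> (r * x) dvd 1"
    using I unfolding ring_ideal_def by blast
  have 1: "(u - v) dvd 1"
  proof (rule ccontr)
    assume "\<not> (u - v) dvd 1"
    then have "\<not> (v + (u - v)) dvd 1" using add v by blast
    then show False using u by simp
  qed
  have 2: "(v - u) dvd 1"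
  proof (rule ccontr)
    assume "\<not> (v - u) dvd 1"
    then have "\<not> ((-1) * (v - u)) dvd 1" using mul by blast
    then have "\<not> (u - v) dvd 1" by simp
    then show False using 1 by simp
  qed
  show ?thesis using 1 2 by simp
qed

lemma wc_udiff:
  fixes S :: "'a::comm_ring_1 set"
  assumes L: "local_ring TYPE('a)" and wc: "well_conditioned S"
  shows "udiff S"
proof (cases "subtractive S")
  case True
  then show ?thesis unfolding subtractive_def udiff_def by blast
next
  case False
  then obtain a where a: "a \<in> S" "subtractive (S - {a})" "zero_divisor a \<or> a = 0"
    using wc unfolding well_conditioned_def by blast
  have z: "(0::'a) \<noteq> 1" using L unfolding local_ring_def by blast
  have na: "\<not> a dvd 1"
  proof
    assume "a dvd 1"
    then obtain k where k: "1 = a * k" by (auto elim: dvdE)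
    show False
    proof (cases "a = 0")
      case True then show False using k z by simp
    next
      case False
      then obtain b where b: "b \<noteq> 0" "a * b = 0" using a(3) unfolding zero_divisor_def by blast
      have "b = (a * k) * b" using k by simp
      also have "\<dots> = k * (a * b)" by (simp add: algebra_simps)
      finally show False using b by simp
    qed
  qed
  show ?thesis unfolding udiff_def
  proof (intro ballI impI)
    fix x y assume xy: "x \<in> S" "y \<in> S" "x \<noteq> y"
    show "(x - y) dvd 1"
    proof (cases "x = a \<or> y = a")
      case True
      then show ?thesis
      proof
        assume xa: "x = a"
        then have "y dvd 1" using a(2) xy unfolding subtractive_def by auto
        then show ?thesis using local_units[OF L na] xa by blast
      next
        assume ya: "y = a"
        then have "x dvd 1" using a(2) xy unfolding subtractive_def by auto
        then show ?thesis using local_units[OF L na] ya by blast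
      qed
    next
      case False
      then show ?thesis using a(2) xy unfolding subtractive_def by auto
    qed
  qed
qed

lemma unit_inv: "(x::'a::comm_ring_1) dvd 1 \<Longrightarrow> x * unit_inv x = 1"
  unfolding unit_inv_def by (rule someI_ex) (auto elim!: dvdE intro: sym)

lemma lin_eval: "poly [:-b,1:] x = x - (b::'a::comm_ring_1)" by simp

lemma lagrange_eval:
  fixes A :: "'a::comm_ring_1 set"
  assumes fin: "finite A" and ud: "udiff A" and sub: "Ai \<subseteq> A" and x: "x \<in> A"
  shows "poly (lagrange_block A Ai) x = (if x \<in> Ai then 1 else 0)"
proof -
  have "poly (lagrange_block A Ai) x = (\<Sum>a\<in>Ai. \<Prod>b\<in>A - {a}. unit_inv (a - b) * (x - b))"
    by (simp only: lagrange_block_def poly_sum poly_prod poly_smult lin_eval)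
  also have "\<dots> = (\<Sum>a\<in>Ai. if a = x then 1 else 0)"
  proof (rule sum.cong[OF refl])
    fix a assume a: "a \<in> Ai"
    show "(\<Prod>b\<in>A - {a}. unit_inv (a - b) * (x - b)) = (if a = x then 1 else 0)"
    proof (cases "a = x")
      case True
      have "(\<Prod>b\<in>A - {a}. unit_inv (a - b) * (x - b)) = (\<Prod>b\<in>A - {a}. 1)"
      proof (rule prod.cong[OF refl])
        fix b assume b: "b \<in> A - {a}"
        then have "(a - b) dvd 1" using ud a sub unfolding udiff_def by auto
        then show "unit_inv (a - b) * (x - b) = 1" using unit_inv[of "a - b"] True
          by (simp add: mult.commute)
      qed
      then show ?thesis using True by simp
    next
      case False
      have "(\<Prod>b\<in>A - {a}. unit_inv (a - b) * (x - b)) = 0"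
        using fin x False by (intro prod_zero) (auto intro!: bexI[where x=x])
      then show ?thesis using False by simp
    qed
  qed
  also have "\<dots> = (if x \<in> Ai then 1 else 0)"
    using finite_subset[OF sub fin] by (simp add: sum.delta)
  finally show ?thesis .
qed

lemma lagrange_deg:
  fixes A :: "'a::comm_ring_1 set"
  assumes fin: "finite A" and sub: "Ai \<subseteq> A"
  shows "deg_less (lagrange_block A Ai) (card A)"
proof (cases "A = {}")
  case True
  then show ?thesis using sub by (simp add: lagrange_block_def deg_less_def)
next
  case False
  then have cpos: "card A > 0" using fin by (simp add: card_gt_0_iff)
  have "degree (lagrange_block A Ai) \<le> card A - 1"
    unfolding lagrange_block_def
  proof (rule degree_sum_le)
    show "finite Ai" using finite_subset[OF sub fin] .
    fix a assume a: "a \<in> Ai"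
    have "degree (\<Prod>b\<in>A - {a}. smult (unit_inv (a - b)) [:- b, 1:])
        \<le> sum (degree \<circ> (\<lambda>b. smult (unit_inv (a - b)) [:- b, 1:])) (A - {a})"
      using fin by (intro degree_prod_sum_le) simp
    also have "\<dots> \<le> sum (\<lambda>b. 1) (A - {a})"
      by (rule sum_mono) (simp add: order_trans[OF degree_smult_le])
    also have "\<dots> = card A - 1" using a sub fin by (simp add: card_Diff_singleton subsetD)
    finally show "degree (\<Prod>b\<in>A - {a}. smult (unit_inv (a - b)) [:- b, 1:]) \<le> card A - 1" .
  qed
  then show ?thesis using cpos unfolding deg_less_def by (intro disjI2) linarith
qed

lemma part_unique:
  assumes "is_partition A B l" "i < l" "j < l" "x \<in> B i" "x \<in> B j"
  shows "i = j"
  using assms unfolding is_partition_def by blast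

lemma part_sub: "is_partition A B l \<Longrightarrow> i < l \<Longrightarrow> B i \<subseteq> A"
  unfolding is_partition_def by blast

lemma part_cover: "is_partition A B l \<Longrightarrow> x \<in> A \<Longrightarrow> \<exists>j<l. x \<in> B j"
  unfolding is_partition_def by blast

lemma part_ne: "is_partition A B l \<Longrightarrow> i < l \<Longrightarrow> \<exists>a. a \<in> B i"
  unfolding is_partition_def by blast

lemma sum_block:
  fixes c :: "nat \<Rightarrow> 'a::comm_ring_1"
  assumes P: "is_partition A B l" and j: "j < l" and x: "x \<in> B j"
  shows "(\<Sum>i<l. c i * (if x \<in> B i then 1 else 0)) = c j"
proof -
  have "(\<Sum>i<l. c i * (if x \<in> B i then 1 else 0)) = (\<Sum>i<l. if i = j then c i else 0)"
  proof (rule sum.cong[OF refl])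
    fix i assume "i \<in> {..<l}"
    then have il: "i < l" by simp
    have "x \<in> B i \<longleftrightarrow> i = j" using part_unique[OF P il j _ x] x by blast
    then show "c i * (if x \<in> B i then 1 else 0) = (if i = j then c i else 0)" by simp
  qed
  also have "\<dots> = c j" using j by (simp add: sum.delta)
  finally show ?thesis .
qed

lemma deg_less_diff: "deg_less f n \<Longrightarrow> deg_less g n \<Longrightarrow> deg_less (f - g) n"
  by (simp add: deg_less_coeff)

lemma deg_less_sum:
  "(\<forall>i<m. deg_less (fs i) n) \<Longrightarrow> deg_less (\<Sum>i<m. smult (c i) (fs i)) n"
  by (simp add: deg_less_coeff coeff_sum)

lemma F_sum:
  assumes "\<forall>i<m. fs i \<in> F_alg A B l"
  shows "(\<Sum>i<m. smult (c i) (fs i)) \<in> F_alg A B l"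
  unfolding F_alg_def
proof (intro CollectI conjI allI impI ballI)
  show "deg_less (\<Sum>i<m. smult (c i) (fs i)) (card A)"
    using assms unfolding F_alg_def by (intro deg_less_sum) blast
  fix j a b assume "j < l" "a \<in> B j" "b \<in> B j"
  then have e: "\<forall>i<m. poly (fs i) a = poly (fs i) b"
    using assms unfolding F_alg_def by blast
  have "(\<Sum>i<m. c i * poly (fs i) a) = (\<Sum>i<m. c i * poly (fs i) b)"
    by (rule sum.cong[OF refl]) (simp add: e)
  then show "poly (\<Sum>i<m. smult (c i) (fs i)) a = poly (\<Sum>i<m. smult (c i) (fs i)) b"
    by (simp add: poly_sum)
qed

lemma ext_poly:
  fixes f g :: "'a::comm_ring_1 poly"
  assumes "finite A" "udiff A" "deg_less f (card A)" "deg_less g (card A)"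
    "\<forall>a\<in>A. poly f a = poly g a"
  shows "f = g"
proof -
  have "f - g = 0"
    using assms by (intro zero_unique[of A _ "card A"]) (auto intro: deg_less_diff)
  then show ?thesis by simp
qed

lemma part3_eval:
  fixes A :: "'a::comm_ring_1 set"
  assumes fin: "finite A" and ud: "udiff A" and P: "is_partition A B l"
    and i: "i < l" and j: "j < l" and x: "x \<in> B j"
  shows "poly (lagrange_block A (B i)) x = (if i = j then 1 else 0)"
proof -
  have xA: "x \<in> A" using part_sub[OF P j] x by blast
  have iff: "x \<in> B i \<longleftrightarrow> i = j" using part_unique[OF P i j _ x] x by blast
  show ?thesis by (simp only: lagrange_eval[OF fin ud part_sub[OF P i] xA] iff)
qed

lemma lagrange_F:
  fixes A :: "'a::comm_ring_1 set"
  assumes fin: "finite A" and ud: "udiff A" and P: "is_partition A B l" and i: "i < l"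
  shows "lagrange_block A (B i) \<in> F_alg A B l"
  unfolding F_alg_def
proof (intro CollectI conjI allI impI ballI)
  show "deg_less (lagrange_block A (B i)) (card A)"
    using lagrange_deg[OF fin part_sub[OF P i]] .
  fix j a b assume j: "j < l" and ab: "a \<in> B j" "b \<in> B j"
  have v: "poly (lagrange_block A (B i)) x = (if i = j then 1 else 0)" if x: "x \<in> B j" for x
    using part3_eval[OF fin ud P i j x] .
  show "poly (lagrange_block A (B i)) a = poly (lagrange_block A (B i)) b"
    using v ab by simp
qed

definition bval :: "'a::comm_ring_1 poly \<Rightarrow> 'a set \<Rightarrow> 'a" where
  "bval f S = poly f (SOME a. a \<in> S)"

lemma bval:
  assumes P: "is_partition A B l" and i: "i < l" and f: "f \<in> F_alg A B l" and x: "x \<in> B i"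
  shows "poly f x = bval f (B i)"
proof -
  have s: "(SOME a. a \<in> B i) \<in> B i" using x by (rule someI)
  have c: "\<forall>a\<in>B i. \<forall>b\<in>B i. poly f a = poly f b"
    using f i unfolding F_alg_def by blast
  show ?thesis unfolding bval_def by (rule bspec[OF bspec[OF c x] s])
qed

lemma basis_intro:
  assumes "\<forall>i<l. fs i \<in> F_alg A B l"
    and "\<forall>f\<in>F_alg A B l. \<exists>c. f = (\<Sum>i<l. smult (c i) (fs i))"
    and "\<forall>c. (\<Sum>i<l. smult (c i) (fs i)) = 0 \<longrightarrow> (\<forall>i<l. c i = 0)"
  shows "is_basis (F_alg A B l) fs l"
  unfolding is_basis_def
proof (intro conjI)
  show "F_alg A B l = {\<Sum>i<l. smult (c i) (fs i) |c. True}"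
  proof (intro equalityI subsetI)
    fix f assume "f \<in> F_alg A B l"
    then obtain c where "f = (\<Sum>i<l. smult (c i) (fs i))" using assms(2) by blast
    then show "f \<in> {\<Sum>i<l. smult (c i) (fs i) |c. True}" by blast
  next
    fix f assume "f \<in> {\<Sum>i<l. smult (c i) (fs i) |c. True}"
    then obtain c where "f = (\<Sum>i<l. smult (c i) (fs i))" by blast
    then show "f \<in> F_alg A B l" using F_sum[of l fs A B l c] assms(1) by simp
  qed
  show "\<forall>c. (\<Sum>i<l. smult (c i) (fs i)) = 0 \<longrightarrow> (\<forall>i<l. c i = 0)" using assms(3) .
qed

lemma part2:
  fixes A :: "'a::comm_ring_1 set"
  assumes fin: "finite A" and ud: "udiff A" and P: "is_partition A B l"
  shows "is_basis (F_alg A B l) (\<lambda>i. lagrange_block A (B i)) l"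
proof (rule basis_intro)
  show "\<forall>i<l. lagrange_block A (B i) \<in> F_alg A B l" using lagrange_F[OF fin ud P] by blast
  have ev: "\<And>c j x. j < l \<Longrightarrow> x \<in> B j \<Longrightarrow>
      poly (\<Sum>i<l. smult (c i) (lagrange_block A (B i))) x = c j"
  proof -
    fix c j x assume j: "j < l" and x: "x \<in> B j"
    have xA: "x \<in> A" using part_sub[OF P j] x by blast
    have "poly (\<Sum>i<l. smult (c i) (lagrange_block A (B i))) x
        = (\<Sum>i<l. c i * (if x \<in> B i then 1 else 0))"
      using lagrange_eval[OF fin ud part_sub[OF P] xA] by (simp add: poly_sum)
    also have "\<dots> = c j" using sum_block[OF P j x] .
    finally show "poly (\<Sum>i<l. smult (c i) (lagrange_block A (B i))) x = c j" .
  qed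
  show "\<forall>f\<in>F_alg A B l. \<exists>c. f = (\<Sum>i<l. smult (c i) (lagrange_block A (B i)))"
  proof
    fix f assume f: "f \<in> F_alg A B l"
    let ?c = "\<lambda>i. bval f (B i)"
    have "f = (\<Sum>i<l. smult (?c i) (lagrange_block A (B i)))"
    proof (rule ext_poly[OF fin ud])
      show "deg_less f (card A)" using f unfolding F_alg_def by blast
      show "deg_less (\<Sum>i<l. smult (?c i) (lagrange_block A (B i))) (card A)"
        using lagrange_F[OF fin ud P] unfolding F_alg_def by (intro deg_less_sum) blast
      show "\<forall>a\<in>A. poly f a = poly (\<Sum>i<l. smult (?c i) (lagrange_block A (B i))) a"
      proof
        fix a assume "a \<in> A"
        then obtain j where j: "j < l" "a \<in> B j" using part_cover[OF P] by blast
        show "poly f a = poly (\<Sum>i<l. smult (?c i) (lagrange_block A (B i))) a"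
          using ev[OF j] bval[OF P j(1) f j(2)] by simp
      qed
    qed
    then show "\<exists>c. f = (\<Sum>i<l. smult (c i) (lagrange_block A (B i)))" by (rule exI[where x="\<lambda>i. bval f (B i)"])
  qed
  show "\<forall>c. (\<Sum>i<l. smult (c i) (lagrange_block A (B i))) = 0 \<longrightarrow> (\<forall>i<l. c i = 0)"
  proof (intro allI impI)
    fix c i assume z: "(\<Sum>i<l. smult (c i) (lagrange_block A (B i))) = 0" and i: "i < l"
    obtain a where a: "a \<in> B i" using part_ne[OF P i] by blast
    show "c i = 0" using ev[OF i a, of c] z by simp
  qed
qed

lemma part1:
  fixes A :: "'a::comm_ring_1 set"
  assumes fin: "finite A" and ud: "udiff A" and P: "is_partition A B l"
    and f: "f \<in> F_alg A B l" and d: "0 < degree f"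
  shows "Max {card (B i) | i. i < l} \<le> degree f \<and> degree f < card A"
proof
  have fne: "f \<noteq> 0" using d by auto
  have fd: "deg_less f (card A)" using f unfolding F_alg_def by blast
  show "degree f < card A" using fd fne unfolding deg_less_def by auto
  have l: "l \<noteq> 0"
  proof
    assume "l = 0"
    then have "A = {}" using P unfolding is_partition_def by auto
    then show False using fd fne unfolding deg_less_def by auto
  qed
  have each: "card (B i) \<le> degree f" if i: "i < l" for i
  proof -
    obtain a where a: "a \<in> B i" using part_ne[OF P i] by blast
    let ?p = "f - [:poly f a:]"
    have sub: "B i \<subseteq> A" using part_sub[OF P i] .
    have finB: "finite (B i)" using finite_subset[OF sub fin] .
    have udB: "udiff (B i)" using ud sub unfolding udiff_def by blast
    have "degree (f + - [:poly f a:]) = degree f" using d by (intro degree_add_eq_left) simp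
    then have dp: "degree ?p = degree f" by (simp only: diff_conv_add_uminus)
    then have pne: "?p \<noteq> 0" using d by auto
    have c: "\<forall>s\<in>B i. poly f s = poly f a" using f i a unfolding F_alg_def by blast
    have z: "\<forall>s\<in>B i. poly ?p s = 0" using c by simp
    have "h_poly (B i) dvd ?p" using root_dvd[OF finB udB z] .
    then obtain q where q: "?p = h_poly (B i) * q" by (rule dvdE)
    then have "q \<noteq> 0" using pne by auto
    then have "degree ?p = card (B i) + degree q" using h_mult[OF finB] q by auto
    then show ?thesis using dp by simp
  qed
  show "Max {card (B i) | i. i < l} \<le> degree f"
    using each l by (subst Max_le_iff) auto
qed

lemma poly_as_sum:
  fixes p :: "'a::comm_ring_1 poly"
  assumes "deg_less p n"
  shows "poly p x = (\<Sum>k<n. coeff p k * x ^ k)"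
proof (cases "p = 0")
  case True then show ?thesis by simp
next
  case False
  then have d: "degree p < n" using assms unfolding deg_less_def by simp
  have "poly p x = (\<Sum>k\<le>degree p. coeff p k * x ^ k)" by (rule poly_altdef)
  also have "\<dots> = (\<Sum>k<n. coeff p k * x ^ k)"
  proof (rule sum.mono_neutral_left)
    show "finite {..<n}" by simp
    show "{..degree p} \<subseteq> {..<n}" using d by auto
    show "\<forall>i\<in>{..<n} - {..degree p}. coeff p i * x ^ i = 0" by (auto simp: coeff_eq_0)
  qed
  finally show ?thesis .
qed

lemma hA_zero:
  assumes "finite A" "(a::'a::comm_ring_1) \<in> A"
  shows "poly (h_poly A) a = 0"
  unfolding h_poly_def poly_prod
  using assms by (intro prod_zero) (auto intro!: bexI[where x=a])

lemma degh: "finite A \<Longrightarrow> degree (h_poly (A::'a::comm_ring_1 set)) = card A"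
  using h_mult[of A 1] by simp

lemma mod_monic_props:
  fixes A :: "'a::comm_ring_1 set"
  assumes fin: "finite A" and ud: "udiff A"
  shows "deg_less (mod_monic p (h_poly A)) (card A) \<and>
         (\<forall>a\<in>A. poly (mod_monic p (h_poly A)) a = poly p a)"
proof -
  define r0 where "r0 = (\<Sum>a\<in>A. smult (poly p a) (lagrange_block A {a}))"
  have lc: "\<forall>a\<in>A. \<forall>k\<ge>card A. coeff (lagrange_block A {a}) k = 0"
    using lagrange_deg[OF fin] unfolding deg_less_coeff by blast
  have dr0: "deg_less r0 (card A)"
    unfolding deg_less_coeff r0_def coeff_sum coeff_smult
    using lc by simp
  have vr0: "poly r0 x = poly p x" if x: "x \<in> A" for x
  proof -
    have "poly r0 x = (\<Sum>a\<in>A. poly p a * (if x \<in> {a} then 1 else 0))"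
      unfolding r0_def poly_sum poly_smult
    proof (rule sum.cong[OF refl])
      fix a assume a: "a \<in> A"
      show "poly p a * poly (lagrange_block A {a}) x = poly p a * (if x \<in> {a} then 1 else 0)"
        using lagrange_eval[OF fin ud _ x, of "{a}"] a by simp
    qed
    also have "\<dots> = (\<Sum>a\<in>A. if a = x then poly p a else 0)"
      by (rule sum.cong[OF refl]) auto
    also have "\<dots> = poly p x" using fin x by (simp add: sum.delta')
    finally show ?thesis .
  qed
  have "\<forall>s\<in>A. poly (p - r0) s = 0" using vr0 by simp
  then have "h_poly A dvd (p - r0)" using root_dvd[OF fin ud] by blast
  then obtain q where q: "p - r0 = h_poly A * q" by (rule dvdE)
  let ?P = "\<lambda>r. deg_less r (degree (h_poly A)) \<and> (\<exists>q. p = q * h_poly A + r)"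
  have Pr0: "?P r0"
  proof
    show "deg_less r0 (degree (h_poly A))" using dr0 degh[OF fin] by simp
    have "p = q * h_poly A + r0" using q by (simp add: algebra_simps)
    then show "\<exists>q. p = q * h_poly A + r0" by blast
  qed
  have uniq: "r = r0" if r: "?P r" for r
  proof (rule ext_poly[OF fin ud])
    show "deg_less r (card A)" using r degh[OF fin] by simp
    show "deg_less r0 (card A)" using dr0 .
    obtain q' where q': "p = q' * h_poly A + r" using r by blast
    show "\<forall>a\<in>A. poly r a = poly r0 a"
    proof
      fix a assume a: "a \<in> A"
      have "poly p a = poly q' a * poly (h_poly A) a + poly r a"
        by (subst q') simp
      then have "poly r a = poly p a" using hA_zero[OF fin a] by simp
      then show "poly r a = poly r0 a" using vr0[OF a] by simp
    qed
  qed
  have "mod_monic p (h_poly A) = r0"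
    unfolding mod_monic_def by (rule the_equality) (use Pr0 uniq in blast)+
  then show ?thesis using dr0 vr0 by simp
qed

lemma part3:
  fixes A :: "'a::comm_ring_1 set" and c :: "nat \<Rightarrow> 'a"
  assumes fin: "finite A" and ud: "udiff A" and P: "is_partition A B l"
    and inj: "inj_on c {..<l}" and udC: "udiff (c ` {..<l})"
    and gv: "\<forall>i<l. \<forall>a\<in>B i. poly g a = c i"
  shows "is_basis (F_alg A B l) (\<lambda>k. mod_monic (g ^ k) (h_poly A)) l"
proof -
  define G where "G = (\<lambda>k. mod_monic (g ^ k) (h_poly A))"
  define C where "C = c ` {..<l}"
  have finC: "finite C" unfolding C_def by simp
  have cardC: "card C = l" unfolding C_def using card_image[OF inj] by simp
  have udC': "udiff C" using udC unfolding C_def .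
  have Gval: "poly (G k) x = c i ^ k" if i: "i < l" and x: "x \<in> B i" for i k x
  proof -
    have xA: "x \<in> A" using part_sub[OF P i] x by blast
    have "poly (G k) x = poly (g ^ k) x" unfolding G_def using mod_monic_props[OF fin ud] xA by blast
    also have "\<dots> = c i ^ k" using gv i x by (simp add: poly_power)
    finally show ?thesis .
  qed
  have Gdeg: "deg_less (G k) (card A)" for k
    unfolding G_def using mod_monic_props[OF fin ud] by blast
  have GF: "G k \<in> F_alg A B l" for k
    unfolding F_alg_def
  proof (intro CollectI conjI allI impI ballI)
    show "deg_less (G k) (card A)" by (rule Gdeg)
    fix i a b assume "i < l" "a \<in> B i" "b \<in> B i"
    then show "poly (G k) a = poly (G k) b" using Gval by simp
  qed
  have evS: "poly (\<Sum>k<l. smult (d k) (G k)) x = (\<Sum>k<l. d k * c i ^ k)"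
    if i: "i < l" and x: "x \<in> B i" for d i x
    unfolding poly_sum poly_smult using Gval[OF i x] by simp
  have cin: "c i \<in> {c j} \<longleftrightarrow> i = j" if "i < l" "j < l" for i j
    using inj that unfolding inj_on_def by auto
  have "is_basis (F_alg A B l) G l"
  proof (rule basis_intro)
    show "\<forall>i<l. G i \<in> F_alg A B l" using GF by blast
    show "\<forall>f\<in>F_alg A B l. \<exists>d. f = (\<Sum>k<l. smult (d k) (G k))"
    proof
      fix f assume f: "f \<in> F_alg A B l"
      define Q where "Q = (\<Sum>j<l. smult (bval f (B j)) (lagrange_block C {c j}))"
      have dQ: "deg_less Q l"
        unfolding Q_def using lagrange_deg[OF finC] cardC C_def
        by (intro deg_less_sum) auto
      have vQ: "poly Q (c i) = bval f (B i)" if i: "i < l" for i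
      proof -
        have ciC: "c i \<in> C" unfolding C_def using i by simp
        have "poly Q (c i) = (\<Sum>j<l. bval f (B j) * (if c i \<in> {c j} then 1 else 0))"
          unfolding Q_def poly_sum poly_smult
        proof (rule sum.cong[OF refl])
          fix j assume j: "j \<in> {..<l}"
          have "{c j} \<subseteq> C" unfolding C_def using j by simp
          then show "bval f (B j) * poly (lagrange_block C {c j}) (c i)
              = bval f (B j) * (if c i \<in> {c j} then 1 else 0)"
            using lagrange_eval[OF finC udC' _ ciC] by simp
        qed
        also have "\<dots> = (\<Sum>j<l. if j = i then bval f (B j) else 0)"
          by (rule sum.cong[OF refl]) (use cin i in auto)
        also have "\<dots> = bval f (B i)" using i by (simp add: sum.delta')
        finally show ?thesis .
      qed
      have "f = (\<Sum>k<l. smult (coeff Q k) (G k))"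
      proof (rule ext_poly[OF fin ud])
        show "deg_less f (card A)" using f unfolding F_alg_def by blast
        show "deg_less (\<Sum>k<l. smult (coeff Q k) (G k)) (card A)"
          using Gdeg by (intro deg_less_sum) blast
        show "\<forall>a\<in>A. poly f a = poly (\<Sum>k<l. smult (coeff Q k) (G k)) a"
        proof
          fix a assume "a \<in> A"
          then obtain i where i: "i < l" "a \<in> B i" using part_cover[OF P] by blast
          have "poly (\<Sum>k<l. smult (coeff Q k) (G k)) a = (\<Sum>k<l. coeff Q k * c i ^ k)"
            using evS[OF i] .
          also have "\<dots> = poly Q (c i)" using poly_as_sum[OF dQ] by simp
          also have "\<dots> = poly f a" using vQ[OF i(1)] bval[OF P i(1) f i(2)] by simp
          finally show "poly f a = poly (\<Sum>k<l. smult (coeff Q k) (G k)) a" by simp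
        qed
      qed
      then show "\<exists>d. f = (\<Sum>k<l. smult (d k) (G k))" by (rule exI[where x="coeff Q"])
    qed
    show "\<forall>d. (\<Sum>k<l. smult (d k) (G k)) = 0 \<longrightarrow> (\<forall>k<l. d k = 0)"
    proof (intro allI impI)
      fix d k assume z: "(\<Sum>k<l. smult (d k) (G k)) = 0" and k: "k < l"
      define D where "D = (\<Sum>k<l. monom (d k) k)"
      have cD: "coeff D j = (if j < l then d j else 0)" for j
        unfolding D_def coeff_sum coeff_monom by (simp add: sum.delta)
      have dD: "deg_less D (card C)" unfolding deg_less_coeff cardC cD by simp
      have "\<forall>s\<in>C. poly D s = 0"
      proof
        fix s assume "s \<in> C"
        then obtain i where i: "i < l" and s: "s = c i" unfolding C_def by blast
        obtain x where x: "x \<in> B i" using part_ne[OF P i] by blast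
        have "poly D s = (\<Sum>k<l. d k * c i ^ k)"
          unfolding D_def poly_sum poly_monom s ..
        also have "\<dots> = 0" using evS[OF i x, of d] z by simp
        finally show "poly D s = 0" .
      qed
      then have "D = 0" using zero_unique[OF finC udC' _ dD] by blast
      then show "d k = 0" using cD[of k] k by simp
    qed
  qed
  then show ?thesis unfolding G_def .
qed

theorem mainTheorem10:
  fixes A :: "'a::comm_ring_1 set" and B :: "nat \<Rightarrow> 'a set" and l :: nat
  assumes R: "finite_chain_ring TYPE('a)"
    and wc: "well_conditioned A"
    and part: "is_partition A B l"
  shows
    "(\<forall>f\<in>F_alg A B l. 0 < degree f \<longrightarrow>
         Max {card (B i) | i. i < l} \<le> degree f \<and> degree f < card A)
     \<and> is_basis (F_alg A B l) (\<lambda>i. lagrange_block A (B i)) l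
     \<and> (\<forall>i<l. \<forall>j<l. \<forall>a\<in>B j. poly (lagrange_block A (B i)) a = (if i = j then 1 else 0))
     \<and> (\<forall>(c :: nat \<Rightarrow> 'a) g. inj_on c {..<l} \<and> well_conditioned (c ` {..<l}) \<and>
          deg_less g (card A) \<and> (\<forall>i<l. \<forall>a\<in>B i. poly g a = c i) \<longrightarrow>
          is_basis (F_alg A B l) (\<lambda>k. mod_monic (g ^ k) (h_poly A)) l)"
proof -
  have L: "local_ring TYPE('a)" using R unfolding finite_chain_ring_def by blast
  have "finite (UNIV :: 'a set)" using R unfolding finite_chain_ring_def by blast
  then have fin: "finite A" by (rule finite_subset[rotated]) simp
  have ud: "udiff A" using wc_udiff[OF L wc] .
  show ?thesis
  proof (intro conjI)
    show "\<forall>f\<in>F_alg A B l. 0 < degree f \<longrightarrow>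
         Max {card (B i) | i. i < l} \<le> degree f \<and> degree f < card A"
    proof (intro ballI impI)
      fix f assume "f \<in> F_alg A B l" "0 < degree f"
      then show "Max {card (B i) | i. i < l} \<le> degree f \<and> degree f < card A"
        by (rule part1[OF fin ud part])
    qed
    show "is_basis (F_alg A B l) (\<lambda>i. lagrange_block A (B i)) l" using part2[OF fin ud part] .
    show "\<forall>i<l. \<forall>j<l. \<forall>a\<in>B j. poly (lagrange_block A (B i)) a = (if i = j then 1 else 0)"
      using part3_eval[OF fin ud part] by simp
    show "\<forall>(c :: nat \<Rightarrow> 'a) g. inj_on c {..<l} \<and> well_conditioned (c ` {..<l}) \<and>
          deg_less g (card A) \<and> (\<forall>i<l. \<forall>a\<in>B i. poly g a = c i) \<longrightarrow>
          is_basis (F_alg A B l) (\<lambda>k. mod_monic (g ^ k) (h_poly A)) l"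
    proof (intro allI impI)
      fix c :: "nat \<Rightarrow> 'a" and g
      assume h: "inj_on c {..<l} \<and> well_conditioned (c ` {..<l}) \<and>
          deg_less g (card A) \<and> (\<forall>i<l. \<forall>a\<in>B i. poly g a = c i)"
      show "is_basis (F_alg A B l) (\<lambda>k. mod_monic (g ^ k) (h_poly A)) l"
      proof (rule part3[OF fin ud part])
        show "inj_on c {..<l}" using h by simp
        show "udiff (c ` {..<l})" using wc_udiff[OF L, of "c ` {..<l}"] h by simp
        show "\<forall>i<l. \<forall>a\<in>B i. poly g a = c i" using h by simp
      qed
    qed
  qed
qed

end
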